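(* Let $m\ge 2$ and $\alpha\in[0,1]$. Define $w_k$ and $t_k$ by the recursion given in the context. There exists a deterministic voting rule $f$ such that for every $k\in[m-1]$ and every election $\mathcal E=(N,A,\vec\sigma)$ with $m$ alternatives whose profile $\vec\sigma$ is moderate-up-to-$k$, $$\mathsf{dist}_\alpha(f(\vec\sigma),\mathcal E)\le 2+\max(\alpha,t_k).$$
   Context: An election $\mathcal E=(N,A,\vec\sigma)$ has a finite set $N$ of $n$ agents, a set $A$ of $m$ alternatives, and a profile $\vec\sigma=(\sigma_1,\dots,\sigma_n)$. Each $\sigma_i=(\pi_i,\Join_i)$ consists of a bijection $\pi_i:[m]\to A$, where $\pi_i(1)$ is agent $i$'s most preferred alternative, and a map $\Join_i:[m-1]\to\{\succ,\succ\!\!\succ\}$. A metric $d$ on $N\cup A$ is nonnegative and symmetric, satisfies the triangle inequality, and has $d(x,x)=0$. The profile $\vec\sigma$ is $\alpha$-consistent with $d$ (mandatory elicitation) if for every agent $i$ and every $j\in[m-1]$: - if $\Join_i(j)=\,\succ$, then $d(i,\pi_i(j+1))\ge d(i,\pi_i(j))>\alpha\, d(i,\pi_i(j+1))$; - if $\Join_i(j)=\,\succ\!\!\succ$, then $d(i,\pi_i(j))\le\alpha\, d(i,\pi_i(j+1))$. Let $\mathrm{sc}_d(a)=\sum_{i\in N}d(i,a)$ and $\mathsf{dist}_\alpha(a,\mathcal E)=\sup_d \mathrm{sc}_d(a)/\min_{b\in A}\mathrm{sc}_d(b)$, the supremum over metrics $d$ with which $\vec\sigma$ is $\alpha$-consistent.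 A preference $\sigma=(\pi,\Join)$ is moderate-up-to-$k$ if $\Join(k+1)=\,\succ\!\!\succ$ and $\Join(i)=\,\succ$ for all $i\in[k]$. If $\Join$ contains no $\succ\!\!\succ$, the preference is moderate-up-to-$(m-1)$. A profile is moderate-up-to-$k$ if every agent's preference is. Define - $w_1=\frac{\alpha+1}{3\alpha+1}$ and $t_1=\frac{1-\alpha}{3\alpha+1}$; - for $k>1$: $w_k=1-\frac{2\alpha}{(1-\alpha)t_{k-1}+2w_{k-1}+2\alpha}$ and $t_k=w_k+(1-w_k)t_{k-1}$. *)

theory Defs
  imports Main "HOL-Library.Extended_Real"
begin

(* Profiles: agent i's ranking is prf i :: nat => 'a on positions 1..m,
   and J i j = True encodes  \<Join>_i(j) = \<succ>\<succ>  (strong), False encodes \<succ>. *)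

definition valid_election :: "nat \<Rightarrow> 'n set \<Rightarrow> 'a set \<Rightarrow> ('n \<Rightarrow> nat \<Rightarrow> 'a) \<Rightarrow> bool" where
  "valid_election m N A prf \<longleftrightarrow> finite N \<and> N \<noteq> {} \<and> finite A \<and> card A = m \<and>
     (\<forall>i\<in>N. bij_betw (prf i) {1..m} A)"

definition is_metric_on :: "'x set \<Rightarrow> ('x \<Rightarrow> 'x \<Rightarrow> real) \<Rightarrow> bool" where
  "is_metric_on S d \<longleftrightarrow> (\<forall>x\<in>S. \<forall>y\<in>S. d x y \<ge> 0 \<and> d x y = d y x) \<and> (\<forall>x\<in>S. d x x = 0) \<and>
     (\<forall>x\<in>S. \<forall>y\<in>S. \<forall>z\<in>S. d x z \<le> d x y + d y z)"

definition alpha_consistent ::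
  "real \<Rightarrow> nat \<Rightarrow> 'n set \<Rightarrow> ('n \<Rightarrow> nat \<Rightarrow> 'a) \<Rightarrow> ('n \<Rightarrow> nat \<Rightarrow> bool)
     \<Rightarrow> ('n + 'a \<Rightarrow> 'n + 'a \<Rightarrow> real) \<Rightarrow> bool" where
  "alpha_consistent \<alpha> m N prf J d \<longleftrightarrow>
     (\<forall>i\<in>N. \<forall>j\<in>{1..m-1}.
        (\<not> J i j \<longrightarrow> d (Inl i) (Inr (prf i (j+1))) \<ge> d (Inl i) (Inr (prf i j)) \<and>
                       d (Inl i) (Inr (prf i j)) > \<alpha> * d (Inl i) (Inr (prf i (j+1)))) \<and>
        (J i j \<longrightarrow> d (Inl i) (Inr (prf i j)) \<le> \<alpha> * d (Inl i) (Inr (prf i (j+1)))))"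

definition social_cost :: "'n set \<Rightarrow> ('n + 'a \<Rightarrow> 'n + 'a \<Rightarrow> real) \<Rightarrow> 'a \<Rightarrow> real" where
  "social_cost N d a = (\<Sum>i\<in>N. d (Inl i) (Inr a))"

definition distortion ::
  "real \<Rightarrow> nat \<Rightarrow> 'n set \<Rightarrow> 'a set \<Rightarrow> ('n \<Rightarrow> nat \<Rightarrow> 'a) \<Rightarrow> ('n \<Rightarrow> nat \<Rightarrow> bool) \<Rightarrow> 'a \<Rightarrow> ereal" where
  "distortion \<alpha> m N A prf J a =
     (SUP d\<in>{d. is_metric_on (Inl ` N \<union> Inr ` A) d \<and> alpha_consistent \<alpha> m N prf J d}.
        ereal (social_cost N d a / (MIN b\<in>A. social_cost N d b)))"

(* moderate-up-to-k: \<Join>(1..k) = \<succ>, and \<Join>(k+1) = \<succ>\<succ> when k+1 \<le> m-1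
   (for k = m-1 this means no \<succ>\<succ> at all) *)
definition moderate_up_to :: "nat \<Rightarrow> nat \<Rightarrow> (nat \<Rightarrow> bool) \<Rightarrow> bool" where
  "moderate_up_to m k Ji \<longleftrightarrow> (\<forall>j\<in>{1..k}. \<not> Ji j) \<and> (k + 1 \<le> m - 1 \<longrightarrow> Ji (k+1))"

(* (w_k, t_k) for k \<ge> 1; value at 0 is an irrelevant dummy *)
fun wt :: "real \<Rightarrow> nat \<Rightarrow> real \<times> real" where
  "wt \<alpha> 0 = (0, 0)"
| "wt \<alpha> (Suc 0) = ((\<alpha> + 1) / (3 * \<alpha> + 1), (1 - \<alpha>) / (3 * \<alpha> + 1))"
| "wt \<alpha> (Suc (Suc k)) =
     (let w = fst (wt \<alpha> (Suc k)); t = snd (wt \<alpha> (Suc k));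
          w' = 1 - 2 * \<alpha> / ((1 - \<alpha>) * t + 2 * w + 2 * \<alpha>)
      in (w', w' + (1 - w') * t))"

definition w_seq :: "real \<Rightarrow> nat \<Rightarrow> real" where "w_seq \<alpha> k = fst (wt \<alpha> k)"
definition t_seq :: "real \<Rightarrow> nat \<Rightarrow> real" where "t_seq \<alpha> k = snd (wt \<alpha> k)"

end

theory Submission
  imports Defs
begin


fun ww :: "real \<Rightarrow> nat \<Rightarrow> real \<times> real" where
  "ww \<alpha> 0 = (1, -1)"
| "ww \<alpha> (Suc k) =
     (let w = fst (ww \<alpha> k); t = snd (ww \<alpha> k);
          w' = 1 - 2 * \<alpha> / ((1 - \<alpha>) * t + 2 * w + 2 * \<alpha>)
      in (w', w' + (1 - w') * t))"

declare ww.simps(2)[simp del]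

lemma ww_inv:
  assumes a0: "0 \<le> \<alpha>" and a1: "\<alpha> \<le> 1"
  shows "0 \<le> fst (ww \<alpha> k) \<and> fst (ww \<alpha> k) \<le> 1 \<and> -1 \<le> snd (ww \<alpha> k) \<and> snd (ww \<alpha> k) \<le> 1
         \<and> 1 \<le> snd (ww \<alpha> k) + 2 * fst (ww \<alpha> k)"
proof (induction k)
  case 0 then show ?case by simp
next
  case (Suc k)
  define W where "W = fst (ww \<alpha> k)"
  define T where "T = snd (ww \<alpha> k)"
  define D where "D = (1 - \<alpha>) * T + 2 * W + 2 * \<alpha>"
  define u where "u = 2 * \<alpha> / D"
  have W0: "0 \<le> W" and W1: "W \<le> 1" and T0: "-1 \<le> T" and T1: "T \<le> 1" and TW: "1 \<le> T + 2 * W"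
    using Suc unfolding W_def T_def by auto
  have "\<alpha> * T \<le> \<alpha>" using mult_left_mono[OF T1 a0] by simp
  hence D1: "1 + \<alpha> \<le> D" unfolding D_def using TW by (simp add: algebra_simps)
  hence Dp: "D > 0" using a0 by simp
  have uD: "u * D = 2 * \<alpha>" unfolding u_def using Dp by simp
  have u0: "0 \<le> u" unfolding u_def using Dp a0 by simp
  have u1: "u \<le> 1" unfolding u_def using Dp D1 a1 by (simp add: divide_le_eq)
  have uT1: "u * T \<le> u" using mult_left_mono[OF T1 u0] by simp
  have uT0: "- u \<le> u * T" using mult_left_mono[OF T0 u0] by simp
  have key: "u * (3 - T) \<le> 2"
  proof -
    have "\<alpha> * (3 - T) \<le> D" unfolding D_def using TW a1 by (simp add: algebra_simps)
    hence "u * (\<alpha> * (3 - T)) \<le> u * D" using mult_left_mono u0 by blast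
    hence "\<alpha> * (u * (3 - T)) \<le> \<alpha> * 2" using uD by (simp add: algebra_simps)
    show ?thesis
    proof (cases "\<alpha> = 0")
      case True then show ?thesis unfolding u_def by simp
    next
      case False then show ?thesis using \<open>\<alpha> * (u * (3 - T)) \<le> \<alpha> * 2\<close> a0 by simp
    qed
  qed
  have e0: "ww \<alpha> (Suc k) = (1 - u, (1 - u) + (1 - (1 - u)) * T)"
    by (simp only: ww.simps Let_def W_def[symmetric] T_def[symmetric] D_def[symmetric] u_def[symmetric])
  hence e: "ww \<alpha> (Suc k) = (1 - u, 1 - u + u * T)" by simp
  show ?case unfolding e using u0 u1 uT1 uT0 key by (simp add: algebra_simps)
qed

lemma ww_id:
  assumes a0: "0 \<le> \<alpha>" and a1: "\<alpha> \<le> 1"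
  shows "(1 - fst (ww \<alpha> (Suc k))) * (snd (ww \<alpha> k) + 2 * fst (ww \<alpha> k))
         = \<alpha> * (snd (ww \<alpha> (Suc k)) + fst (ww \<alpha> (Suc k)))"
proof -
  define W where "W = fst (ww \<alpha> k)"
  define T where "T = snd (ww \<alpha> k)"
  define D where "D = (1 - \<alpha>) * T + 2 * W + 2 * \<alpha>"
  have TW: "1 \<le> T + 2 * W" and T1: "T \<le> 1" using ww_inv[OF a0 a1, of k] unfolding W_def T_def by auto
  have "\<alpha> * T \<le> \<alpha>" using mult_left_mono[OF T1 a0] by simp
  hence Dp: "D > 0" unfolding D_def using TW a0 by (simp add: algebra_simps)
  define u where "u = 2 * \<alpha> / D"
  have uD: "u * D = 2 * \<alpha>" unfolding u_def using Dp by simp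
  have e0: "ww \<alpha> (Suc k) = (1 - u, (1 - u) + (1 - (1 - u)) * T)"
    by (simp only: ww.simps Let_def W_def[symmetric] T_def[symmetric] D_def[symmetric] u_def[symmetric])
  hence e: "ww \<alpha> (Suc k) = (1 - u, 1 - u + u * T)" by simp
  have "u * (T + 2 * W) = \<alpha> * (2 - 2 * u + u * T)"
    using uD unfolding D_def by (simp add: algebra_simps)
  then show ?thesis unfolding e W_def[symmetric] T_def[symmetric] by (simp add: algebra_simps)
qed

lemma ww_wt: "k \<ge> 1 \<Longrightarrow> ww \<alpha> k = wt \<alpha> k" if "0 \<le> \<alpha>"
proof (induction k rule: nat_induct_at_least)
  case base
  have "3 * \<alpha> + 1 \<noteq> 0" using that by simp
  then show ?case by (simp add: field_simps ww.simps Let_def)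
next
  case (Suc n)
  then obtain j where "n = Suc j" by (cases n) auto
  then show ?case using Suc by (simp add: Let_def ww.simps)
qed

fun qq :: "real \<Rightarrow> nat \<Rightarrow> nat \<Rightarrow> real" where
  "qq \<alpha> 0 l = (if l = 1 then 1 else 0)"
| "qq \<alpha> (Suc k) l = (if l = 0 then 0 else if l = 1 then fst (ww \<alpha> (Suc k))
                          else (1 - fst (ww \<alpha> (Suc k))) * qq \<alpha> k (l - 1))"

lemma qq_1: "qq \<alpha> k 1 = fst (ww \<alpha> k)"
  by (cases k) auto

lemma qq_nonneg: assumes "0 \<le> \<alpha>" "\<alpha> \<le> 1" shows "0 \<le> qq \<alpha> k l"
proof (induction k arbitrary: l)
  case 0 then show ?case by simp
next
  case (Suc k)
  have "0 \<le> fst (ww \<alpha> (Suc k))" "fst (ww \<alpha> (Suc k)) \<le> 1" using ww_inv[OF assms] by auto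
  then show ?case using Suc by simp
qed

lemma qq_zero: "k + 1 < l \<Longrightarrow> qq \<alpha> k l = 0"
proof (induction k arbitrary: l)
  case 0 then show ?case by simp
next
  case (Suc k)
  then show ?case by simp
qed

lemma qq_sum: "k + 1 \<le> n \<Longrightarrow> (\<Sum>l=1..n. qq \<alpha> k l) = 1"
proof (induction k arbitrary: n)
  case 0
  then have "{1..n} = insert 1 {2..n}" by auto
  then show ?case by simp
next
  case (Suc k)
  obtain n' where n: "n = Suc n'" using Suc.prems by (cases n) auto
  have "{1..n} = insert 1 {Suc 1..Suc n'}" using n Suc.prems by auto
  hence "(\<Sum>l=1..n. qq \<alpha> (Suc k) l) = qq \<alpha> (Suc k) 1 + (\<Sum>l=Suc 1..Suc n'. qq \<alpha> (Suc k) l)"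
    by simp
  also have "(\<Sum>l=Suc 1..Suc n'. qq \<alpha> (Suc k) l) = (\<Sum>l=1..n'. qq \<alpha> (Suc k) (Suc l))"
    by (rule sum.shift_bounds_cl_Suc_ivl)
  also have "\<dots> = (\<Sum>l=1..n'. (1 - fst (ww \<alpha> (Suc k))) * qq \<alpha> k l)"
    by (rule sum.cong) auto
  also have "\<dots> = (1 - fst (ww \<alpha> (Suc k)))" using Suc.IH[of n'] Suc.prems n
    by (simp add: sum_distrib_left[symmetric])
  finally show ?case by simp
qed

lemma qq_sum_ext:
  assumes "k + 1 \<le> n"
  shows "(\<Sum>l=1..n. qq \<alpha> k l * x l) = (\<Sum>l=1..k+1. qq \<alpha> k l * x l)"
proof -
  have "{1..n} = {1..k+1} \<union> {k+2..n}" using assms by auto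
  hence "(\<Sum>l=1..n. qq \<alpha> k l * x l) = (\<Sum>l=1..k+1. qq \<alpha> k l * x l) + (\<Sum>l=k+2..n. qq \<alpha> k l * x l)"
    by (simp add: sum.union_disjoint)
  moreover have "(\<Sum>l=k+2..n. qq \<alpha> k l * x l) = 0"
    by (rule sum.neutral) (auto simp: qq_zero)
  ultimately show ?thesis by simp
qed

lemma chain_mono:
  assumes "\<forall>l\<in>{1..n}. (x::nat\<Rightarrow>real) l \<le> x (Suc l)" "1 \<le> i" "i \<le> j" "j \<le> n + 1"
  shows "x i \<le> x j"
  using assms(3,4)
proof (induction j)
  case 0 then show ?case by simp
next
  case (Suc j)
  show ?case
  proof (cases "i = Suc j")
    case True then show ?thesis by simp
  next
    case False
    then have "x i \<le> x j" using Suc by simp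
    also have "x j \<le> x (Suc j)" using assms(1) Suc False assms(2) by auto
    finally show ?thesis .
  qed
qed

lemma key_ineq:
  assumes a0: "0 \<le> \<alpha>" and a1: "\<alpha> \<le> 1"
    and hx: "\<forall>l\<in>{1..k}. x l \<le> x (Suc l) \<and> \<alpha> * x (Suc l) \<le> x l"
    and hp: "p \<in> {1..k+1}"
  shows "(\<Sum>l=1..k+1. qq \<alpha> k l * x l) \<le> (snd (ww \<alpha> k) + 2 * qq \<alpha> k p) * x p"
  using hx hp
proof (induction k arbitrary: x p)
  case 0
  then show ?case by simp
next
  case (Suc k)
  define w where "w = fst (ww \<alpha> (Suc k))"
  define W where "W = fst (ww \<alpha> k)"
  define T where "T = snd (ww \<alpha> k)"
  define t where "t = snd (ww \<alpha> (Suc k))"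
  define y where "y = (\<lambda>l. x (Suc l))"
  have w0: "0 \<le> w" and w1: "w \<le> 1" and tw: "1 \<le> t + 2 * w" and t1: "t \<le> 1"
    using ww_inv[OF a0 a1, of "Suc k"] unfolding w_def t_def by auto
  have tdef: "t = w + (1 - w) * T" unfolding t_def w_def T_def by (simp add: Let_def ww.simps)
  have idt: "(1 - w) * (T + 2 * W) = \<alpha> * (t + w)"
    using ww_id[OF a0 a1, of k] unfolding w_def t_def T_def W_def .
  have hy: "\<forall>l\<in>{1..k}. y l \<le> y (Suc l) \<and> \<alpha> * y (Suc l) \<le> y l"
    using Suc.prems(1) unfolding y_def by auto
  have split: "(\<Sum>l=1..Suc k+1. qq \<alpha> (Suc k) l * x l) = w * x 1 + (1 - w) * (\<Sum>l=1..k+1. qq \<alpha> k l * y l)"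
  proof -
    have "{1..Suc k + 1} = insert 1 {Suc 1..Suc (k+1)}" by auto
    hence "(\<Sum>l=1..Suc k+1. qq \<alpha> (Suc k) l * x l) = qq \<alpha> (Suc k) 1 * x 1 + (\<Sum>l=Suc 1..Suc (k+1). qq \<alpha> (Suc k) l * x l)"
      by simp
    also have "(\<Sum>l=Suc 1..Suc (k+1). qq \<alpha> (Suc k) l * x l) = (\<Sum>l=1..k+1. qq \<alpha> (Suc k) (Suc l) * x (Suc l))"
      by (rule sum.shift_bounds_cl_Suc_ivl)
    also have "\<dots> = (\<Sum>l=1..k+1. (1 - w) * (qq \<alpha> k l * y l))"
      by (rule sum.cong) (auto simp: w_def y_def)
    finally show ?thesis by (simp add: sum_distrib_left[symmetric] w_def)
  qed
  show ?case
  proof (cases "p = 1")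
    case True
    have IH: "(\<Sum>l=1..k+1. qq \<alpha> k l * y l) \<le> (T + 2 * W) * y 1"
      using Suc.IH[OF hy, of 1] unfolding qq_1 by (simp add: T_def W_def)
    have "(1 - w) * (\<Sum>l=1..k+1. qq \<alpha> k l * y l) \<le> (1 - w) * ((T + 2 * W) * y 1)"
      using mult_left_mono[OF IH] w1 by simp
    also have "\<dots> = ((1 - w) * (T + 2 * W)) * y 1" by (simp add: mult.assoc)
    also have "\<dots> = (t + w) * (\<alpha> * x 2)" unfolding idt y_def by (simp add: numeral_2_eq_2)
    also have "\<dots> \<le> (t + w) * x 1"
      using Suc.prems(1) tw w1 by (intro mult_left_mono) (auto simp: numeral_2_eq_2)
    finally have "w * x 1 + (1 - w) * (\<Sum>l=1..k+1. qq \<alpha> k l * y l) \<le> (t + 2 * w) * x 1"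
      by (simp add: algebra_simps)
    then show ?thesis using True split by (simp add: qq_1 w_def t_def)
  next
    case False
    then obtain p' where p: "p = Suc p'" "p' \<in> {1..k+1}" using Suc.prems(2) by (cases p) auto
    have IH: "(\<Sum>l=1..k+1. qq \<alpha> k l * y l) \<le> (T + 2 * qq \<alpha> k p') * y p'"
      using Suc.IH[OF hy p(2)] by (simp add: T_def)
    have x1p: "x 1 \<le> x p"
      using chain_mono[of "Suc k" x 1 p] Suc.prems p by auto
    have "w * x 1 + (1 - w) * (\<Sum>l=1..k+1. qq \<alpha> k l * y l) \<le> w * x p + (1 - w) * ((T + 2 * qq \<alpha> k p') * y p')"
      using mult_left_mono[OF IH, of "1 - w"] mult_left_mono[OF x1p w0] w1 by simp
    also have "\<dots> = (t + 2 * qq \<alpha> (Suc k) p) * x p"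
      using p unfolding tdef y_def by (simp add: w_def algebra_simps)
    finally show ?thesis using split by (simp add: t_def)
  qed
qed



lemma bottom_fill:
  fixes r :: "'a \<Rightarrow> nat" and s :: "'a \<Rightarrow> real"
  assumes "finite B" "\<forall>c\<in>B. 0 \<le> s c" "0 \<le> \<mu>" "\<mu> \<le> sum s B"
  shows "\<exists>v. (\<forall>c\<in>B. 0 \<le> v c \<and> v c \<le> s c) \<and> sum v B = \<mu> \<and>
             (\<forall>c\<in>B. \<forall>c'\<in>B. 0 < v c \<longrightarrow> r c < r c' \<longrightarrow> v c' = s c')"
  using assms
proof (induction "card B" arbitrary: B \<mu> rule: less_induct)
  case less
  show ?case
  proof (cases "B = {}")
    case True
    then show ?thesis using less.prems by (intro exI[of _ "\<lambda>_. 0"]) auto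
  next
    case False
    have "Max (r ` B) \<in> r ` B" using False less.prems(1) by simp
    then obtain w where wB: "w \<in> B" and wM: "r w = Max (r ` B)" by auto
    have wmax: "\<forall>c\<in>B. r c \<le> r w" unfolding wM using less.prems(1) by simp
    have sB: "sum s B = s w + sum s (B - {w})" using wB less.prems(1) by (simp add: sum.remove)
    show ?thesis
    proof (cases "\<mu> \<le> s w")
      case True
      show ?thesis
      proof (intro exI[of _ "\<lambda>c. if c = w then \<mu> else 0"] conjI ballI impI)
        fix c assume "c \<in> B"
        then show "0 \<le> (if c = w then \<mu> else 0)" "(if c = w then \<mu> else 0) \<le> s c"
          using True less.prems(2,3) by auto
      next
        show "sum (\<lambda>c. if c = w then \<mu> else 0) B = \<mu>" using wB less.prems(1) by simp
      next
        fix c c' assume "c \<in> B" "c' \<in> B" "0 < (if c = w then \<mu> else 0)" "r c < r c'"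
        then show "(if c' = w then \<mu> else 0) = s c'" using wmax by (auto split: if_splits)
      qed
    next
      case False
      have cl: "card (B - {w}) < card B" by (rule card_Diff1_less[OF less.prems(1) wB])
      have f': "finite (B - {w})" using less.prems(1) by simp
      have n': "\<forall>c\<in>B - {w}. 0 \<le> s c" using less.prems(2) by simp
      have h1: "0 \<le> \<mu> - s w" using False by simp
      have h2: "\<mu> - s w \<le> sum s (B - {w})" using less.prems(4) sB by simp
      obtain v where v1: "\<forall>c\<in>B - {w}. 0 \<le> v c \<and> v c \<le> s c"
        and v2: "sum v (B - {w}) = \<mu> - s w"
        and v3: "\<forall>c\<in>B - {w}. \<forall>c'\<in>B - {w}. 0 < v c \<longrightarrow> r c < r c' \<longrightarrow> v c' = s c'"
        using less.hyps[OF cl f' n' h1 h2] by (elim exE conjE)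
      show ?thesis
      proof (intro exI[of _ "v(w := s w)"] conjI ballI impI)
        fix c assume "c \<in> B" then show "0 \<le> (v(w := s w)) c" "(v(w := s w)) c \<le> s c"
          using v1 less.prems(2) by auto
      next
        have "sum (v(w := s w)) B = s w + sum (v(w := s w)) (B - {w})"
          using wB less.prems(1) by (simp add: sum.remove)
        also have "sum (v(w := s w)) (B - {w}) = sum v (B - {w})" by (rule sum.cong) auto
        finally show "sum (v(w := s w)) B = \<mu>" using v2 by simp
      next
        fix c c' assume H: "c \<in> B" "c' \<in> B" "0 < (v(w := s w)) c" "r c < r c'"
        show "(v(w := s w)) c' = s c'"
        proof (cases "c' = w")
          case True then show ?thesis by simp
        next
          case False
          have "r c' \<le> r w" using wmax H(2) by blast
          then have cw: "c \<noteq> w" using H(4) by auto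
          then have "0 < v c" using H(3) by simp
          then have "v c' = s c'" using v3 H(1,2,4) cw False by blast
          then show ?thesis using False by simp
        qed
      qed
    qed
  qed
qed

definition veto_ok where
  "veto_ok N A r s V a \<longleftrightarrow> (\<forall>i\<in>N. \<forall>c\<in>A. 0 \<le> V i c) \<and> (\<forall>i\<in>N. sum (V i) A = 1) \<and>
      (\<forall>c\<in>A. (\<Sum>i\<in>N. V i c) = s c) \<and> (\<forall>i\<in>N. \<forall>c\<in>A. 0 < V i c \<longrightarrow> r i a \<le> (r i c :: nat))"

lemma veto_exists:
  fixes r :: "'n \<Rightarrow> 'a \<Rightarrow> nat" and s :: "'a \<Rightarrow> real"
  assumes "finite N" "N \<noteq> {}" "finite A" "\<forall>c\<in>A. 0 \<le> s c" "sum s A = real (card N)"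
  shows "\<exists>a\<in>A. 0 < s a \<and> (\<exists>V. veto_ok N A r s V a)"
  using assms(1,2,4,5)
proof (induction N arbitrary: s rule: finite_ne_induct)
  case (singleton i0)
  have sn: "\<forall>c\<in>A. 0 \<le> s c" and ss: "sum s A = 1" using singleton.prems by simp_all
  define S where "S = {c\<in>A. 0 < s c}"
  have "S \<noteq> {}"
  proof
    assume "S = {}"
    then have "\<forall>c\<in>A. s c = 0" using sn unfolding S_def by (metis (mono_tags, lifting) empty_Collect_eq order_le_less)
    then have "sum s A = 0" by simp
    then show False using ss by simp
  qed
  then obtain c0 where "c0 \<in> S" by blast
  then obtain a where aS: "a \<in> S" and amin: "\<forall>c. c \<in> S \<longrightarrow> r i0 a \<le> r i0 c"
    using ex_has_least_nat[of "\<lambda>c. c \<in> S" c0 "r i0"] by blast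
  have aA: "a \<in> A" and sa: "0 < s a" using aS unfolding S_def by simp_all
  have "veto_ok {i0} A r s (\<lambda>i c. s c) a"
    unfolding veto_ok_def
  proof (intro conjI ballI impI)
    fix i c assume "i \<in> {i0}" "c \<in> A" then show "0 \<le> s c" using sn by simp
  next
    fix i assume "i \<in> {i0}" then show "sum s A = 1" using ss by simp
  next
    fix c assume "c \<in> A" then show "(\<Sum>i\<in>{i0}. s c) = s c" by simp
  next
    fix i c assume "i \<in> {i0}" "c \<in> A" "0 < s c"
    then have "c \<in> S" unfolding S_def by simp
    then show "r i a \<le> r i c" using amin \<open>i \<in> {i0}\<close> by simp
  qed
  then show ?case using aA sa by blast
next
  case (insert i0 N')
  have sn: "\<forall>c\<in>A. 0 \<le> s c" and ss: "sum s A = real (card N') + 1"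
    using insert.prems insert.hyps by (simp_all add: card_insert_if)
  have "1 \<le> sum s A" using ss by simp
  have "\<exists>v. (\<forall>c\<in>A. 0 \<le> v c \<and> v c \<le> s c) \<and> sum v A = 1 \<and>
             (\<forall>c\<in>A. \<forall>c'\<in>A. 0 < v c \<longrightarrow> r i0 c < r i0 c' \<longrightarrow> v c' = s c')"
    by (rule bottom_fill[OF assms(3) sn _ \<open>1 \<le> sum s A\<close>]) simp
  then obtain v where v1: "\<forall>c\<in>A. 0 \<le> v c \<and> v c \<le> s c" and v2: "sum v A = 1"
     and v3: "\<forall>c\<in>A. \<forall>c'\<in>A. 0 < v c \<longrightarrow> r i0 c < r i0 c' \<longrightarrow> v c' = s c'"
    by (elim exE conjE)
  define s' where "s' = (\<lambda>c. s c - v c)"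
  have ss': "sum s' A = real (card N')"
    unfolding s'_def using ss v2 by (simp add: sum_subtractf)
  have sn': "\<forall>c\<in>A. 0 \<le> s' c" unfolding s'_def using v1 by simp
  obtain a V where aA: "a \<in> A" and sa: "0 < s' a" and V: "veto_ok N' A r s' V a"
    using insert.IH[OF sn' ss'] by (elim bexE conjE exE)
  have V1: "\<forall>i\<in>N'. \<forall>c\<in>A. 0 \<le> V i c" and V2: "\<forall>i\<in>N'. sum (V i) A = 1"
    and V3: "\<forall>c\<in>A. (\<Sum>i\<in>N'. V i c) = s' c"
    and V4: "\<forall>i\<in>N'. \<forall>c\<in>A. 0 < V i c \<longrightarrow> r i a \<le> r i c"
    using V unfolding veto_ok_def by blast+
  define V' where "V' = (\<lambda>i c. if i = i0 then v c else V i c)"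
  have "veto_ok (insert i0 N') A r s V' a"
    unfolding veto_ok_def
  proof (intro conjI ballI impI)
    fix i c assume i: "i \<in> insert i0 N'" and c: "c \<in> A"
    show "0 \<le> V' i c"
    proof (cases "i = i0")
      case True then show ?thesis unfolding V'_def using v1 c by simp
    next
      case False then show ?thesis unfolding V'_def using V1 c i by simp
    qed
  next
    fix i assume i: "i \<in> insert i0 N'"
    show "sum (V' i) A = 1"
    proof (cases "i = i0")
      case True then show ?thesis unfolding V'_def using v2 by simp
    next
      case False then show ?thesis unfolding V'_def using V2 i by simp
    qed
  next
    fix c assume cA: "c \<in> A"
    have "(\<Sum>i\<in>insert i0 N'. V' i c) = V' i0 c + (\<Sum>i\<in>N'. V' i c)"
      using insert.hyps by simp
    also have "(\<Sum>i\<in>N'. V' i c) = (\<Sum>i\<in>N'. V i c)"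
      using insert.hyps unfolding V'_def by (intro sum.cong) auto
    also have "\<dots> = s' c" using V3 cA by simp
    finally show "(\<Sum>i\<in>insert i0 N'. V' i c) = s c" unfolding s'_def V'_def by simp
  next
    fix i c assume i: "i \<in> insert i0 N'" and c: "c \<in> A" and pos: "0 < V' i c"
    show "r i a \<le> r i c"
    proof (cases "i = i0")
      case True
      show ?thesis
      proof (rule ccontr)
        assume "\<not> r i a \<le> r i c"
        then have lt: "r i0 c < r i0 a" using True by simp
        have "0 < v c" using pos True unfolding V'_def by simp
        then have "v a = s a" using v3 c aA lt by blast
        then show False using sa unfolding s'_def by simp
      qed
    next
      case False
      then have "i \<in> N'" "0 < V i c" using i pos unfolding V'_def by simp_all
      then show ?thesis using V4 c by blast
    qed
  qed
  moreover have "0 < s a"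
  proof -
    have "0 \<le> v a" using v1 aA by blast
    then show ?thesis using sa unfolding s'_def by simp
  qed
  ultimately show ?case using aA by blast
qed



lemma pos_bound:
  assumes a0: "0 \<le> \<alpha>" and a1: "\<alpha> \<le> 1" and km: "k + 1 \<le> m"
    and mono: "\<forall>l\<in>{1..m-1}. x l \<le> x (Suc l)"
    and rat: "\<forall>l\<in>{1..k}. \<alpha> * x (Suc l) \<le> x l"
    and gap: "k + 1 \<le> m - 1 \<longrightarrow> x (k+1) \<le> \<alpha> * x (k+2)"
    and nn: "\<forall>l\<in>{1..m}. 0 \<le> x l"
    and p: "p \<in> {1..m}" and g1: "\<alpha> \<le> \<gamma>" and g2: "snd (ww \<alpha> k) \<le> \<gamma>"
  shows "(\<Sum>l=1..m. qq \<alpha> k l * (if l = p then 0 else x p + x l)) \<le> (1 + \<gamma>) * x p"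
proof -
  define S where "S = (\<Sum>l=1..k+1. qq \<alpha> k l * x l)"
  have e1: "(\<Sum>l=1..m. qq \<alpha> k l * (if l = p then 0 else x p + x l))
      = (\<Sum>l=1..m. qq \<alpha> k l * (x p + x l)) - (\<Sum>l=1..m. if l = p then qq \<alpha> k l * (x p + x l) else 0)"
    by (subst sum_subtractf[symmetric]) (rule sum.cong, auto)
  have e2: "(\<Sum>l=1..m. if l = p then qq \<alpha> k l * (x p + x l) else 0) = qq \<alpha> k p * (2 * x p)"
    using p by simp
  have e3: "(\<Sum>l=1..m. qq \<alpha> k l * (x p + x l)) = x p + S"
  proof -
    have "(\<Sum>l=1..m. qq \<alpha> k l * (x p + x l)) = x p * (\<Sum>l=1..m. qq \<alpha> k l) + (\<Sum>l=1..m. qq \<alpha> k l * x l)"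
      by (simp add: algebra_simps sum.distrib sum_distrib_left)
    then show ?thesis using qq_sum[OF km] qq_sum_ext[OF km] unfolding S_def by simp
  qed
  have xp0: "0 \<le> x p" using nn p by auto
  show ?thesis
  proof (cases "p \<le> k + 1")
    case True
    have hx: "\<forall>l\<in>{1..k}. x l \<le> x (Suc l) \<and> \<alpha> * x (Suc l) \<le> x l"
      using mono rat km by auto
    have "S \<le> (snd (ww \<alpha> k) + 2 * qq \<alpha> k p) * x p"
      unfolding S_def using key_ineq[OF a0 a1 hx, of p] True p by auto
    then have "x p + S - qq \<alpha> k p * (2 * x p) \<le> (1 + snd (ww \<alpha> k)) * x p"
      by (simp add: algebra_simps)
    also have "\<dots> \<le> (1 + \<gamma>) * x p" using g2 xp0 by (intro mult_right_mono) auto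
    finally show ?thesis using e1 e2 e3 by simp
  next
    case False
    have qp: "qq \<alpha> k p = 0" using False by (simp add: qq_zero)
    have "S \<le> (\<Sum>l=1..k+1. qq \<alpha> k l * x (k+1))"
      unfolding S_def
    proof (rule sum_mono)
      fix l assume "l \<in> {1..k+1}"
      then have "x l \<le> x (k+1)" using chain_mono[of "m-1" x l "k+1"] mono km by auto
      then show "qq \<alpha> k l * x l \<le> qq \<alpha> k l * x (k+1)"
        using qq_nonneg[OF a0 a1] by (intro mult_left_mono) auto
    qed
    also have "\<dots> = x (k+1)" using qq_sum[of k "k+1" \<alpha>] by (simp add: sum_distrib_right[symmetric])
    also have "\<dots> \<le> \<alpha> * x (k+2)" using gap False p by auto
    also have "\<dots> \<le> \<alpha> * x p"
      using chain_mono[of "m-1" x "k+2" p] mono False p a0 by (intro mult_left_mono) auto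
    finally have "S \<le> \<alpha> * x p" .
    then have "x p + S \<le> (1 + \<gamma>) * x p" using g1 xp0 mult_right_mono[OF g1 xp0]
      by (simp add: algebra_simps)
    then show ?thesis using e1 e2 e3 qp by simp
  qed
qed



definition rk :: "nat \<Rightarrow> ('n \<Rightarrow> nat \<Rightarrow> 'a) \<Rightarrow> 'n \<Rightarrow> 'a \<Rightarrow> nat" where
  "rk m prf i c = the_inv_into {1..m} (prf i) c"

lemma rk_facts:
  assumes "bij_betw (prf i) {1..m} A"
  shows "c \<in> A \<Longrightarrow> rk m prf i c \<in> {1..m}" "c \<in> A \<Longrightarrow> prf i (rk m prf i c) = c"
    "l \<in> {1..m} \<Longrightarrow> rk m prf i (prf i l) = l" "l \<in> {1..m} \<Longrightarrow> prf i l \<in> A"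
proof -
  have inj: "inj_on (prf i) {1..m}" and im: "prf i ` {1..m} = A" using assms unfolding bij_betw_def by auto
  show "c \<in> A \<Longrightarrow> rk m prf i c \<in> {1..m}" unfolding rk_def
    using the_inv_into_into[OF inj, of c "{1..m}"] im by auto
  show "c \<in> A \<Longrightarrow> prf i (rk m prf i c) = c" unfolding rk_def
    using f_the_inv_into_f[OF inj, of c] im by auto
  show "l \<in> {1..m} \<Longrightarrow> rk m prf i (prf i l) = l" unfolding rk_def
    using the_inv_into_f_f[OF inj] by auto
  show "l \<in> {1..m} \<Longrightarrow> prf i l \<in> A" using im by auto
qed

lemma sum_pos:
  assumes "bij_betw (prf i) {1..m} A"
  shows "(\<Sum>c\<in>A. g c) = (\<Sum>l=1..m. g (prf i l))"
  using sum.reindex_bij_betw[OF assms, of g] by simp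

definition score :: "real \<Rightarrow> nat \<Rightarrow> nat \<Rightarrow> 'n set \<Rightarrow> ('n \<Rightarrow> nat \<Rightarrow> 'a) \<Rightarrow> 'a \<Rightarrow> real" where
  "score \<alpha> m k N prf c = (\<Sum>j\<in>N. qq \<alpha> k (rk m prf j c))"

lemma score_sum:
  assumes "valid_election m N A prf" "k + 1 \<le> m"
  shows "sum (score \<alpha> m k N prf) A = real (card N)"
proof -
  have "sum (score \<alpha> m k N prf) A = (\<Sum>j\<in>N. \<Sum>c\<in>A. qq \<alpha> k (rk m prf j c))"
    unfolding score_def by (rule sum.swap)
  also have "\<dots> = (\<Sum>j\<in>N. 1)"
  proof (rule sum.cong)
    fix j assume j: "j \<in> N"
    have bj: "bij_betw (prf j) {1..m} A" using assms j unfolding valid_election_def by auto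
    have "(\<Sum>c\<in>A. qq \<alpha> k (rk m prf j c)) = (\<Sum>l=1..m. qq \<alpha> k (rk m prf j (prf j l)))"
      by (rule sum_pos[of "prf" j m A, OF bj])
    also have "\<dots> = (\<Sum>l=1..m. qq \<alpha> k l)" using rk_facts(3)[of "prf" j m A, OF bj] by (intro sum.cong) auto
    also have "\<dots> = 1" by (rule qq_sum[OF assms(2)])
    finally show "(\<Sum>c\<in>A. qq \<alpha> k (rk m prf j c)) = 1" .
  qed simp
  finally show ?thesis by simp
qed

definition kof :: "nat \<Rightarrow> 'n set \<Rightarrow> ('n \<Rightarrow> nat \<Rightarrow> bool) \<Rightarrow> nat" where
  "kof m N J = (if \<exists>k\<in>{1..m-1}. \<forall>i\<in>N. moderate_up_to m k (J i)
                then SOME k. k\<in>{1..m-1} \<and> (\<forall>i\<in>N. moderate_up_to m k (J i)) else 1)"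

definition vrule :: "real \<Rightarrow> nat \<Rightarrow> 'n set \<Rightarrow> 'a set \<Rightarrow> ('n \<Rightarrow> nat \<Rightarrow> 'a) \<Rightarrow> ('n \<Rightarrow> nat \<Rightarrow> bool) \<Rightarrow> 'a" where
  "vrule \<alpha> m N A prf J = (SOME a. a \<in> A \<and> (\<exists>V. veto_ok N A (rk m prf) (score \<alpha> m (kof m N J) N prf) V a))"

lemma kof_range: assumes "2 \<le> m" shows "kof m N J \<in> {1..m-1}"
proof (cases "\<exists>k\<in>{1..m-1}. \<forall>i\<in>N. moderate_up_to m k (J i)")
  case True
  then have ex: "\<exists>k. k\<in>{1..m-1} \<and> (\<forall>i\<in>N. moderate_up_to m k (J i))" by blast
  have "(SOME k. k\<in>{1..m-1} \<and> (\<forall>i\<in>N. moderate_up_to m k (J i))) \<in> {1..m-1}"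
    using someI_ex[OF ex] by blast
  then show ?thesis unfolding kof_def using True by simp
next
  case False then show ?thesis unfolding kof_def using assms by (simp only: if_not_P[OF False]) simp
qed

lemma moderate_unique:
  assumes "moderate_up_to m k Ji" "moderate_up_to m k' Ji" "k \<in> {1..m-1}" "k' \<in> {1..m-1}"
  shows "k = k'"
proof (rule ccontr)
  assume "k \<noteq> k'"
  then consider "k < k'" | "k' < k" by linarith
  then show False
  proof cases
    case 1 then show False using assms unfolding moderate_up_to_def by auto
  next
    case 2 then show False using assms unfolding moderate_up_to_def by auto
  qed
qed

lemma kof_eq:
  assumes "N \<noteq> {}" "k \<in> {1..m-1}" "\<forall>i\<in>N. moderate_up_to m k (J i)"
  shows "kof m N J = k"
proof -
  obtain i where i: "i \<in> N" using assms by auto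
  have ex: "\<exists>k. k\<in>{1..m-1} \<and> (\<forall>i\<in>N. moderate_up_to m k (J i))" using assms by blast
  have "(SOME k. k\<in>{1..m-1} \<and> (\<forall>i\<in>N. moderate_up_to m k (J i))) = k"
  proof (rule someI2_ex[OF ex])
    fix k' assume "k'\<in>{1..m-1} \<and> (\<forall>i\<in>N. moderate_up_to m k' (J i))"
    then show "k' = k" using moderate_unique[of m k' "J i" k] assms i by auto
  qed
  then show ?thesis unfolding kof_def using assms by auto
qed

lemma vrule_ok:
  assumes m2: "2 \<le> m" and a0: "0 \<le> \<alpha>" and a1: "\<alpha> \<le> 1" and v: "valid_election m N A prf"
  shows "vrule \<alpha> m N A prf J \<in> A \<and>
         (\<exists>V. veto_ok N A (rk m prf) (score \<alpha> m (kof m N J) N prf) V (vrule \<alpha> m N A prf J))"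
proof -
  let ?s = "score \<alpha> m (kof m N J) N prf"
  have "kof m N J + 1 \<le> m" using kof_range[OF m2, of N J] by auto
  then have ss: "sum ?s A = real (card N)" using score_sum[OF v] by blast
  have nn: "\<forall>c\<in>A. 0 \<le> ?s c" unfolding score_def using qq_nonneg[OF a0 a1] by (auto intro: sum_nonneg)
  have "\<exists>a\<in>A. 0 < ?s a \<and> (\<exists>V. veto_ok N A (rk m prf) ?s V a)"
    using veto_exists[of N A ?s "rk m prf"] v nn ss unfolding valid_election_def by auto
  then have "\<exists>a. a \<in> A \<and> (\<exists>V. veto_ok N A (rk m prf) ?s V a)" by blast
  then show ?thesis unfolding vrule_def by (rule someI_ex)
qed



lemma voter_facts:
  assumes a0: "0 \<le> \<alpha>" and a1: "\<alpha> \<le> 1" and v: "valid_election m N A prf"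
    and met: "is_metric_on (Inl ` N \<union> Inr ` A) d"
    and con: "alpha_consistent \<alpha> m N prf J d" and i: "i \<in> N"
  shows "\<forall>l\<in>{1..m}. 0 \<le> d (Inl i) (Inr (prf i l))"
    and "\<forall>l\<in>{1..m-1}. d (Inl i) (Inr (prf i l)) \<le> d (Inl i) (Inr (prf i (Suc l)))"
    and "moderate_up_to m k (J i) \<Longrightarrow> k \<le> m - 1 \<Longrightarrow> \<forall>l\<in>{1..k}. \<alpha> * d (Inl i) (Inr (prf i (Suc l))) \<le> d (Inl i) (Inr (prf i l))"
    and "moderate_up_to m k (J i) \<Longrightarrow> k \<le> m - 1 \<Longrightarrow> k + 1 \<le> m - 1 \<longrightarrow>
           d (Inl i) (Inr (prf i (k+1))) \<le> \<alpha> * d (Inl i) (Inr (prf i (k+2)))"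
proof -
  have bj: "bij_betw (prf i) {1..m} A" using v i unfolding valid_election_def by auto
  have inA: "\<And>l. l \<in> {1..m} \<Longrightarrow> prf i l \<in> A" using bj unfolding bij_betw_def by auto
  show nn: "\<forall>l\<in>{1..m}. 0 \<le> d (Inl i) (Inr (prf i l))"
    using met inA i unfolding is_metric_on_def by blast
  have C: "\<And>j. j \<in> {1..m-1} \<Longrightarrow>
        (\<not> J i j \<longrightarrow> d (Inl i) (Inr (prf i (j+1))) \<ge> d (Inl i) (Inr (prf i j)) \<and>
                       d (Inl i) (Inr (prf i j)) > \<alpha> * d (Inl i) (Inr (prf i (j+1)))) \<and>
        (J i j \<longrightarrow> d (Inl i) (Inr (prf i j)) \<le> \<alpha> * d (Inl i) (Inr (prf i (j+1))))"
    using con i unfolding alpha_consistent_def by blast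
  show "\<forall>l\<in>{1..m-1}. d (Inl i) (Inr (prf i l)) \<le> d (Inl i) (Inr (prf i (Suc l)))"
  proof
    fix l assume l: "l \<in> {1..m-1}"
    have z: "0 \<le> d (Inl i) (Inr (prf i (Suc l)))" using nn l by auto
    have "\<alpha> * d (Inl i) (Inr (prf i (Suc l))) \<le> d (Inl i) (Inr (prf i (Suc l)))"
      using mult_right_mono[OF a1 z] by simp
    then show "d (Inl i) (Inr (prf i l)) \<le> d (Inl i) (Inr (prf i (Suc l)))"
      using C[OF l] by (cases "J i l") auto
  qed
  show "moderate_up_to m k (J i) \<Longrightarrow> k \<le> m - 1 \<Longrightarrow> \<forall>l\<in>{1..k}. \<alpha> * d (Inl i) (Inr (prf i (Suc l))) \<le> d (Inl i) (Inr (prf i l))"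
  proof
    fix l assume md: "moderate_up_to m k (J i)" and km: "k \<le> m - 1" and l: "l \<in> {1..k}"
    show "\<alpha> * d (Inl i) (Inr (prf i (Suc l))) \<le> d (Inl i) (Inr (prf i l))"
      using C[of l] l md km unfolding moderate_up_to_def by auto
  qed
  show "moderate_up_to m k (J i) \<Longrightarrow> k \<le> m - 1 \<Longrightarrow> k + 1 \<le> m - 1 \<longrightarrow>
           d (Inl i) (Inr (prf i (k+1))) \<le> \<alpha> * d (Inl i) (Inr (prf i (k+2)))"
    using C[of "k+1"] unfolding moderate_up_to_def by auto
qed

lemma main_bound:
  assumes m2: "2 \<le> m" and a0: "0 \<le> \<alpha>" and a1: "\<alpha> \<le> 1" and v: "valid_election m N A prf"
    and k: "k \<in> {1..m-1}" and md: "\<forall>i\<in>N. moderate_up_to m k (J i)"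
    and met: "is_metric_on (Inl ` N \<union> Inr ` A) d"
    and con: "alpha_consistent \<alpha> m N prf J d"
    and aA: "a \<in> A" and V: "veto_ok N A (rk m prf) (score \<alpha> m k N prf) V a"
    and bA: "b \<in> A" and g1: "\<alpha> \<le> \<gamma>" and g2: "snd (ww \<alpha> k) \<le> \<gamma>"
  shows "social_cost N d a \<le> (2 + \<gamma>) * social_cost N d b"
proof -
  have fin: "finite N" "finite A" using v unfolding valid_election_def by auto
  have bj: "\<And>i. i \<in> N \<Longrightarrow> bij_betw (prf i) {1..m} A" using v unfolding valid_election_def by auto
  have V1: "\<forall>i\<in>N. \<forall>c\<in>A. 0 \<le> V i c" and V2: "\<forall>i\<in>N. sum (V i) A = 1"
    and V3: "\<forall>c\<in>A. (\<Sum>i\<in>N. V i c) = score \<alpha> m k N prf c"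
    and V4: "\<forall>i\<in>N. \<forall>c\<in>A. 0 < V i c \<longrightarrow> rk m prf i a \<le> rk m prf i c"
    using V unfolding veto_ok_def by auto
  have P1: "\<forall>x\<in>Inl ` N \<union> Inr ` A. \<forall>y\<in>Inl ` N \<union> Inr ` A. d x y \<ge> 0 \<and> d x y = d y x"
    and P3: "\<forall>x\<in>Inl ` N \<union> Inr ` A. \<forall>y\<in>Inl ` N \<union> Inr ` A. \<forall>z\<in>Inl ` N \<union> Inr ` A. d x z \<le> d x y + d y z"
    using conjunct1[OF met[unfolded is_metric_on_def]] conjunct2[OF conjunct2[OF met[unfolded is_metric_on_def]]]
    by simp_all
  have M1: "d x y = d y x" if "x \<in> Inl ` N \<union> Inr ` A" "y \<in> Inl ` N \<union> Inr ` A" for x y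
    using bspec[OF bspec[OF P1 that(1)] that(2)] by (elim conjE)
  have M2: "d x z \<le> d x y + d y z"
    if "x \<in> Inl ` N \<union> Inr ` A" "y \<in> Inl ` N \<union> Inr ` A" "z \<in> Inl ` N \<union> Inr ` A" for x y z
    using bspec[OF bspec[OF bspec[OF P3 that(1)] that(2)] that(3)] .
  have step1: "\<And>i c. i \<in> N \<Longrightarrow> c \<in> A \<Longrightarrow> 0 < V i c \<Longrightarrow> d (Inl i) (Inr a) \<le> d (Inl i) (Inr c)"
  proof -
    fix i c assume i: "i \<in> N" and c: "c \<in> A" and pos: "0 < V i c"
    have r: "rk m prf i a \<le> rk m prf i c" using V4 i c pos by auto
    have ra: "rk m prf i a \<in> {1..m}" "prf i (rk m prf i a) = a" using rk_facts[of "prf" i m A, OF bj[OF i]] aA by auto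
    have rc: "rk m prf i c \<in> {1..m}" "prf i (rk m prf i c) = c" using rk_facts[of "prf" i m A, OF bj[OF i]] c by auto
    have mono: "\<forall>l\<in>{1..m-1}. d (Inl i) (Inr (prf i l)) \<le> d (Inl i) (Inr (prf i (Suc l)))"
      using voter_facts(2)[OF a0 a1 v met con i] .
    have "d (Inl i) (Inr (prf i (rk m prf i a))) \<le> d (Inl i) (Inr (prf i (rk m prf i c)))"
      using chain_mono[of "m-1" "\<lambda>l. d (Inl i) (Inr (prf i l))" "rk m prf i a" "rk m prf i c"] mono r ra rc
      by auto
    then show "d (Inl i) (Inr a) \<le> d (Inl i) (Inr c)" using ra rc by simp
  qed
  define g where "g = (\<lambda>c. if c = b then 0 else d (Inr b) (Inr c))"
  have step2: "\<And>i c. i \<in> N \<Longrightarrow> c \<in> A \<Longrightarrow> V i c * d (Inl i) (Inr a) \<le> V i c * (d (Inl i) (Inr b) + g c)"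
  proof -
    fix i c assume i: "i \<in> N" and c: "c \<in> A"
    show "V i c * d (Inl i) (Inr a) \<le> V i c * (d (Inl i) (Inr b) + g c)"
    proof (cases "V i c = 0")
      case True then show ?thesis by simp
    next
      case False
      then have pos: "0 < V i c" using V1 i c by force
      have "d (Inl i) (Inr a) \<le> d (Inl i) (Inr c)" by (rule step1[OF i c pos])
      also have "\<dots> \<le> d (Inl i) (Inr b) + g c"
        unfolding g_def using M2[of "Inl i" "Inr b" "Inr c"] i c bA by auto
      finally show ?thesis using pos by (intro mult_left_mono) auto
    qed
  qed
  have "social_cost N d a = (\<Sum>i\<in>N. \<Sum>c\<in>A. V i c * d (Inl i) (Inr a))"
    unfolding social_cost_def
  proof (rule sum.cong)
    fix i assume "i \<in> N"
    then show "d (Inl i) (Inr a) = (\<Sum>c\<in>A. V i c * d (Inl i) (Inr a))"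
      using V2 by (simp add: sum_distrib_right[symmetric])
  qed simp
  also have "\<dots> \<le> (\<Sum>i\<in>N. \<Sum>c\<in>A. V i c * (d (Inl i) (Inr b) + g c))"
    using step2 by (intro sum_mono) auto
  also have "\<dots> = (\<Sum>i\<in>N. d (Inl i) (Inr b)) + (\<Sum>i\<in>N. \<Sum>c\<in>A. V i c * g c)"
  proof -
    have "(\<Sum>i\<in>N. \<Sum>c\<in>A. V i c * (d (Inl i) (Inr b) + g c))
        = (\<Sum>i\<in>N. d (Inl i) (Inr b) * (\<Sum>c\<in>A. V i c) + (\<Sum>c\<in>A. V i c * g c))"
      by (simp add: distrib_left sum.distrib sum_distrib_right mult.commute)
    also have "\<dots> = (\<Sum>i\<in>N. d (Inl i) (Inr b) + (\<Sum>c\<in>A. V i c * g c))"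
      using V2 by (intro sum.cong) auto
    finally show ?thesis by (simp add: sum.distrib)
  qed
  also have "(\<Sum>i\<in>N. \<Sum>c\<in>A. V i c * g c) = (\<Sum>c\<in>A. score \<alpha> m k N prf c * g c)"
    by (subst sum.swap) (simp add: sum_distrib_right[symmetric] V3)
  also have "\<dots> = (\<Sum>j\<in>N. \<Sum>c\<in>A. qq \<alpha> k (rk m prf j c) * g c)"
    unfolding score_def by (subst sum.swap) (simp add: sum_distrib_right)
  also have "\<dots> \<le> (\<Sum>j\<in>N. (1 + \<gamma>) * d (Inl j) (Inr b))"
  proof (rule sum_mono)
    fix j assume j: "j \<in> N"
    define x where "x = (\<lambda>l. d (Inl j) (Inr (prf j l)))"
    define p where "p = rk m prf j b"
    have rb: "p \<in> {1..m}" "prf j p = b" using rk_facts[of "prf" j m A, OF bj[OF j]] bA unfolding p_def by auto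
    have "(\<Sum>c\<in>A. qq \<alpha> k (rk m prf j c) * g c)
        \<le> (\<Sum>c\<in>A. qq \<alpha> k (rk m prf j c) * (if c = b then 0 else d (Inl j) (Inr b) + d (Inl j) (Inr c)))"
    proof (rule sum_mono)
      fix c assume c: "c \<in> A"
      have "g c \<le> (if c = b then 0 else d (Inl j) (Inr b) + d (Inl j) (Inr c))"
        unfolding g_def using M2[of "Inr b" "Inl j" "Inr c"] M1[of "Inr b" "Inl j"] j c bA by auto
      then show "qq \<alpha> k (rk m prf j c) * g c
          \<le> qq \<alpha> k (rk m prf j c) * (if c = b then 0 else d (Inl j) (Inr b) + d (Inl j) (Inr c))"
        using qq_nonneg[OF a0 a1] by (intro mult_left_mono) auto
    qed
    also have "\<dots> = (\<Sum>l=1..m. qq \<alpha> k (rk m prf j (prf j l)) *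
          (if prf j l = b then 0 else d (Inl j) (Inr b) + d (Inl j) (Inr (prf j l))))"
      by (rule sum_pos[of "prf" j m A, OF bj[OF j]])
    also have "\<dots> = (\<Sum>l=1..m. qq \<alpha> k l * (if l = p then 0 else x p + x l))"
    proof (rule sum.cong)
      fix l assume l: "l \<in> {1..m}"
      have r: "rk m prf j (prf j l) = l" using rk_facts(3)[of "prf" j m A, OF bj[OF j] l] .
      have "prf j l = b \<longleftrightarrow> l = p" using r rb unfolding p_def by auto
      then show "qq \<alpha> k (rk m prf j (prf j l)) *
          (if prf j l = b then 0 else d (Inl j) (Inr b) + d (Inl j) (Inr (prf j l)))
          = qq \<alpha> k l * (if l = p then 0 else x p + x l)"
        using r rb unfolding x_def by auto
    qed simp
    also have "\<dots> \<le> (1 + \<gamma>) * x p"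
    proof (rule pos_bound[OF a0 a1])
      show "k + 1 \<le> m" using k by auto
      show "\<forall>l\<in>{1..m-1}. x l \<le> x (Suc l)" unfolding x_def by (rule voter_facts(2)[OF a0 a1 v met con j])
      show "\<forall>l\<in>{1..k}. \<alpha> * x (Suc l) \<le> x l" unfolding x_def
        using voter_facts(3)[OF a0 a1 v met con j, of k] md j k by auto
      show "k + 1 \<le> m - 1 \<longrightarrow> x (k+1) \<le> \<alpha> * x (k+2)" unfolding x_def
        using voter_facts(4)[OF a0 a1 v met con j, of k] md j k by auto
      show "\<forall>l\<in>{1..m}. 0 \<le> x l" unfolding x_def by (rule voter_facts(1)[OF a0 a1 v met con j])
    qed (use rb g1 g2 in auto)
    also have "x p = d (Inl j) (Inr b)" unfolding x_def using rb by simp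
    finally show "(\<Sum>c\<in>A. qq \<alpha> k (rk m prf j c) * g c) \<le> (1 + \<gamma>) * d (Inl j) (Inr b)" .
  qed
  also have "(\<Sum>j\<in>N. (1 + \<gamma>) * d (Inl j) (Inr b)) = (1 + \<gamma>) * social_cost N d b"
    unfolding social_cost_def by (simp add: sum_distrib_left)
  finally show ?thesis unfolding social_cost_def by (simp add: algebra_simps)
qed



theorem theorem2:
  fixes m :: nat and \<alpha> :: real
  assumes "m \<ge> 2" and "0 \<le> \<alpha>" and "\<alpha> \<le> 1"
  shows "\<exists>f :: 'n set \<Rightarrow> 'a set \<Rightarrow> ('n \<Rightarrow> nat \<Rightarrow> 'a) \<Rightarrow> ('n \<Rightarrow> nat \<Rightarrow> bool) \<Rightarrow> 'a.
           (\<forall>N A prf J. valid_election m N A prf \<longrightarrow> f N A prf J \<in> A) \<and>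
           (\<forall>k \<in> {1..m-1}. \<forall>N A prf J.
              valid_election m N A prf \<longrightarrow> (\<forall>i\<in>N. moderate_up_to m k (J i)) \<longrightarrow>
              distortion \<alpha> m N A prf J (f N A prf J) \<le> ereal (2 + max \<alpha> (t_seq \<alpha> k)))"
proof (intro exI[of _ "vrule \<alpha> m"] conjI allI ballI impI)
  fix N :: "'n set" and A :: "'a set" and "prf" J
  assume "valid_election m N A prf"
  then show "vrule \<alpha> m N A prf J \<in> A" using vrule_ok[OF assms] by blast
next
  fix k N and A :: "'a set" and "prf" and J :: "'n \<Rightarrow> nat \<Rightarrow> bool"
  assume k: "k \<in> {1..m-1}" and v: "valid_election m N A prf" and md: "\<forall>i\<in>N. moderate_up_to m k (J i)"
  define \<gamma> where "\<gamma> = max \<alpha> (t_seq \<alpha> k)"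
  have Nne: "N \<noteq> {}" and finA: "finite A" and Ane: "A \<noteq> {}"
    using v assms(1) unfolding valid_election_def by auto
  have tk: "t_seq \<alpha> k = snd (ww \<alpha> k)" unfolding t_seq_def using ww_wt[OF assms(2)] k by simp
  have kk: "kof m N J = k" by (rule kof_eq[OF Nne k md])
  define a where "a = vrule \<alpha> m N A prf J"
  obtain V where aA: "a \<in> A" and V: "veto_ok N A (rk m prf) (score \<alpha> m k N prf) V a"
    using vrule_ok[OF assms v, of J] kk unfolding a_def by auto
  have g0: "0 \<le> \<gamma>" unfolding \<gamma>_def using assms by auto
  show "distortion \<alpha> m N A prf J (vrule \<alpha> m N A prf J) \<le> ereal (2 + max \<alpha> (t_seq \<alpha> k))"
    unfolding distortion_def a_def[symmetric] \<gamma>_def[symmetric]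
  proof (rule SUP_least)
    fix d assume "d \<in> {d. is_metric_on (Inl ` N \<union> Inr ` A) d \<and> alpha_consistent \<alpha> m N prf J d}"
    then have met: "is_metric_on (Inl ` N \<union> Inr ` A) d" and con: "alpha_consistent \<alpha> m N prf J d" by auto
    have "Min (social_cost N d ` A) \<in> social_cost N d ` A" using finA Ane by (intro Min_in) auto
    then obtain b where bA: "b \<in> A" and bm: "(MIN b\<in>A. social_cost N d b) = social_cost N d b"
      by auto
    have b0: "0 \<le> social_cost N d b"
      unfolding social_cost_def using met bA unfolding is_metric_on_def by (intro sum_nonneg) auto
    have bound: "social_cost N d a \<le> (2 + \<gamma>) * social_cost N d b"
      by (rule main_bound[OF assms v k md met con aA V bA]) (auto simp: \<gamma>_def tk)
    have "social_cost N d a / social_cost N d b \<le> 2 + \<gamma>"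
    proof (cases "social_cost N d b = 0")
      case True then show ?thesis using g0 by simp
    next
      case False then have "0 < social_cost N d b" using b0 by simp
      then show ?thesis using bound by (simp add: pos_divide_le_eq)
    qed
    then show "ereal (social_cost N d a / (MIN b\<in>A. social_cost N d b)) \<le> ereal (2 + \<gamma>)"
      unfolding bm by simp
  qed
qed

end
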